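(* For any two finite sets $A_1$ and $A_2$ of lines in $\mathbb{R}^2$, there exists a line $\ell$, bounding closed halfplanes $\ell^+$ and $\ell^-$, and sets $A_i^\sigma\subseteq A_i$ for $i\in\{1,2\}$ and $\sigma\in\{+,-\}$, such that $|A_i^\sigma|\ge |A_i|^{1/2}$ and $V(A_i^\sigma)\subseteq \ell^\sigma$.
   Context: For a finite set $A$ of lines in $\mathbb{R}^2$, $V(A)$ denotes the set of all intersection points of pairs of lines of $A$. *)

theory Defs
  imports Complex_Main
begin

definition line_eq :: "real \<Rightarrow> real \<Rightarrow> real \<Rightarrow> (real \<times> real) set" where
  "line_eq a b c = {(x, y). a * x + b * y = c}"

definition is_line :: "(real \<times> real) set \<Rightarrow> bool" where
  "is_line L \<longleftrightarrow> (\<exists>a b c. (a, b) \<noteq> (0, 0) \<and> L = line_eq a b c)"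

definition V :: "(real \<times> real) set set \<Rightarrow> (real \<times> real) set" where
  "V A = {p. \<exists>L\<in>A. \<exists>M\<in>A. L \<noteq> M \<and> p \<in> L \<and> p \<in> M}"

definition halfplane_plus :: "real \<Rightarrow> real \<Rightarrow> real \<Rightarrow> (real \<times> real) set" where
  "halfplane_plus a b c = {(x, y). a * x + b * y \<ge> c}"

definition halfplane_minus :: "real \<Rightarrow> real \<Rightarrow> real \<Rightarrow> (real \<times> real) set" where
  "halfplane_minus a b c = {(x, y). a * x + b * y \<le> c}"

end

theory Submission
  imports Defs
begin

lemma ES:
  fixes X :: "'a set" and lt :: "'a \<Rightarrow> 'a \<Rightarrow> bool"
  assumes fin: "finite X" and irr: "\<forall>x\<in>X. \<not> lt x x"
    and tr: "\<forall>x\<in>X. \<forall>y\<in>X. \<forall>z\<in>X. lt x y \<longrightarrow> lt y z \<longrightarrow> lt x z"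
  shows "\<exists>C\<subseteq>X. sqrt (real (card X)) \<le> real (card C) \<and>
     ((\<forall>x\<in>C. \<forall>y\<in>C. x \<noteq> y \<longrightarrow> lt x y \<or> lt y x) \<or> (\<forall>x\<in>C. \<forall>y\<in>C. \<not> lt x y))"
proof (rule ccontr)
  assume neg: "\<not> ?thesis"
  define chain where "chain C \<longleftrightarrow> (\<forall>x\<in>C. \<forall>y\<in>C. x \<noteq> y \<longrightarrow> lt x y \<or> lt y x)" for C
  have small: "real (card C) < sqrt (real (card X))" if "C \<subseteq> X" "chain C" for C
    using neg that unfolding chain_def by (meson not_le)
  have smallA: "real (card C) < sqrt (real (card X))" if "C \<subseteq> X" "\<forall>x\<in>C. \<forall>y\<in>C. \<not> lt x y" for C
    using neg that by (meson not_le)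
  have Xne: "X \<noteq> {}"
    using smallA[of "{}"] by (auto simp: card_gt_0_iff)
  define cs where "cs x = {C. C \<subseteq> X \<and> chain C \<and> x \<in> C \<and> (\<forall>y\<in>C. y = x \<or> lt y x)}" for x
  define h where "h x = Max (card ` cs x)" for x
  have csfin: "finite (cs x)" for x
    by (rule finite_subset[of _ "Pow X"]) (auto simp: cs_def fin)
  have csne: "{x} \<in> cs x" if "x \<in> X" for x
    using that by (auto simp: cs_def chain_def)
  have hin: "h x \<in> card ` cs x" if "x \<in> X" for x
    unfolding h_def using csfin csne[OF that] by (intro Max_in) auto
  have hge: "1 \<le> h x" if "x \<in> X" for x
  proof -
    have "card {x} \<in> card ` cs x" using csne[OF that] by (rule imageI)
    hence "card {x} \<le> h x" unfolding h_def using csfin by (intro Max_ge) auto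
    thus ?thesis by simp
  qed
  have hlt: "real (h x) < sqrt (real (card X))" if "x \<in> X" for x
    using hin[OF that] small by (auto simp: cs_def)
  have hinc: "h x < h y" if xy: "x \<in> X" "y \<in> X" "lt x y" for x y
  proof -
    obtain C where C: "C \<in> cs x" "card C = h x" using hin[OF xy(1)] by auto
    have CX: "C \<subseteq> X" "chain C" "x \<in> C" "\<forall>z\<in>C. z = x \<or> lt z x" using C by (auto simp: cs_def)
    have lty: "lt z y" if "z \<in> C" for z
      using CX that xy tr by (metis subsetD)
    have ynot: "y \<notin> C"
      using lty irr xy by blast
    have "insert y C \<in> cs y"
      using CX lty xy unfolding cs_def chain_def by auto
    hence "card (insert y C) \<le> h y"
      unfolding h_def using csfin by (intro Max_ge) auto
    moreover have "card (insert y C) = Suc (h x)"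
      using ynot C CX fin by (simp add: finite_subset)
    ultimately show ?thesis by simp
  qed
  define F where "F v = {x\<in>X. h x = v}" for v
  have Fsmall: "real (card (F v)) < sqrt (real (card X))" for v
    by (rule smallA) (auto simp: F_def dest: hinc)
  have "card X = card (\<Union>v\<in>h`X. F v)"
    by (rule arg_cong[where f=card]) (auto simp: F_def)
  also have "\<dots> \<le> (\<Sum>v\<in>h`X. card (F v))"
    using fin by (intro card_UN_le) auto
  finally have "real (card X) \<le> (\<Sum>v\<in>h`X. real (card (F v)))"
    by (metis of_nat_le_iff of_nat_sum)
  also have "\<dots> < (\<Sum>v\<in>h`X. sqrt (real (card X)))"
    using fin Xne Fsmall by (intro sum_strict_mono) auto
  also have "\<dots> = real (card (h`X)) * sqrt (real (card X))" by simp
  also have "\<dots> \<le> real (Max (h`X)) * sqrt (real (card X))"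
  proof -
    have "h`X \<subseteq> {1..Max (h`X)}"
      using fin hge by auto
    hence "card (h`X) \<le> Max (h`X)"
      by (metis card_atLeastAtMost card_mono diff_Suc_1 finite_atLeastAtMost)
    thus ?thesis by (intro mult_right_mono) auto
  qed
  also have "\<dots> \<le> sqrt (real (card X)) * sqrt (real (card X))"
  proof -
    have "Max (h`X) \<in> h`X" using fin Xne by (intro Max_in) auto
    then obtain x where "x \<in> X" "Max (h`X) = h x" by auto
    thus ?thesis using hlt[of x] by (intro mult_right_mono) auto
  qed
  also have "\<dots> = real (card X)" by simp
  finally show False by simp
qed


definition sc :: "real \<Rightarrow> real \<Rightarrow> real \<times> real \<Rightarrow> real" where
  "sc a b p = a * fst p + b * snd p"
definition tc :: "real \<Rightarrow> real \<Rightarrow> real \<times> real \<Rightarrow> real" where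
  "tc a b p = - b * fst p + a * snd p"

lemma line_cases:
  assumes "is_line L" "(a, b) \<noteq> (0::real, 0::real)"
  shows "(\<exists>mu nu. L = {p. tc a b p = mu * sc a b p + nu}) \<or> (\<exists>d. L = {p. sc a b p = d})"
proof -
  obtain u v w where uv: "(u, v) \<noteq> (0, 0)" and L: "L = line_eq u v w"
    using assms(1) unfolding is_line_def by auto
  define N where "N = a^2 + b^2"
  have N: "N > 0" using assms(2) unfolding N_def
    by (metis add_nonneg_pos add_pos_nonneg prod.inject sum_power2_gt_zero_iff zero_le_power2)
  define be where "be = v * a - u * b"
  show ?thesis
  proof (cases "be = 0")
    case False
    define mu where "mu = - (u * a + v * b) / be"
    define nu where "nu = N * w / be"
    have "L = {p. tc a b p = mu * sc a b p + nu}"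
    proof -
      have key: "(u*a+v*b)*(a*x+b*y) + be*(-b*x+a*y) = N*(u*x+v*y)" for x y
        unfolding be_def N_def by (simp add: algebra_simps power2_eq_square)
      have "(-b*x+a*y = mu*(a*x+b*y) + nu) \<longleftrightarrow> (u*x+v*y = w)" for x y
      proof -
        have "(-b*x+a*y = mu*(a*x+b*y) + nu) \<longleftrightarrow> be*(-b*x+a*y) = be*(mu*(a*x+b*y) + nu)"
          using False by simp
        also have "\<dots> \<longleftrightarrow> be*(-b*x+a*y) + (u*a+v*b)*(a*x+b*y) = N*w"
        proof -
          have "be*(mu*(a*x+b*y) + nu) = N*w - (u*a+v*b)*(a*x+b*y)"
            unfolding mu_def nu_def using False by (simp add: field_simps)
          thus ?thesis by linarith
        qed
        also have "\<dots> \<longleftrightarrow> N*(u*x+v*y) = N*w"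
          using key[of x y] by (simp add: algebra_simps)
        also have "\<dots> \<longleftrightarrow> u*x+v*y = w" using N by simp
        finally show ?thesis .
      qed
      thus ?thesis unfolding L line_eq_def tc_def sc_def by auto
    qed
    thus ?thesis by blast
  next
    case True
    define lam where "lam = (u*a+v*b)/N"
    have e1: "N * u - (u*a+v*b) * a = - b * be" unfolding N_def be_def by (simp add: algebra_simps power2_eq_square)
    have e2: "N * v - (u*a+v*b) * b = a * be" unfolding N_def be_def by (simp add: algebra_simps power2_eq_square)
    have u: "u = lam * a"
    proof -
      have "N * u = (u*a+v*b) * a" using e1 True by simp
      thus ?thesis unfolding lam_def using N by (simp add: field_simps)
    qed
    have v: "v = lam * b"
    proof -
      have "N * v = (u*a+v*b) * b" using e2 True by simp
      thus ?thesis unfolding lam_def using N by (simp add: field_simps)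
    qed
    have lam: "lam \<noteq> 0" using uv u v by auto
    have "L = {p. sc a b p = w / lam}"
      unfolding L line_eq_def sc_def using lam by (auto simp: u v field_simps)
    thus ?thesis by blast
  qed
qed


lemma dichotomy:
  assumes fin: "finite A" and lines: "\<forall>L\<in>A. is_line L" and ab: "(a, b) \<noteq> (0::real, 0::real)"
  shows "(\<exists>S\<subseteq>A. sqrt (real (card A)) \<le> real (card S) \<and> V S \<subseteq> halfplane_plus a b c) \<or>
         (\<exists>S\<subseteq>A. sqrt (real (card A)) \<le> real (card S) \<and> V S \<subseteq> halfplane_minus a b c)"
proof -
  define NP where "NP L \<longleftrightarrow> (\<exists>mu nu. L = {p. tc a b p = mu * sc a b p + nu})" for L
  define rep where "rep L = (SOME q. L = {p. tc a b p = fst q * sc a b p + snd q})" for L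
  define mu where "mu L = fst (rep L)" for L
  define nu where "nu L = snd (rep L)" for L
  define tau where "tau L = mu L * c + nu L" for L
  define dd where "dd L = (SOME d. L = {p. sc a b p = d})" for L
  have repL: "L = {p. tc a b p = mu L * sc a b p + nu L}" if "NP L" for L
  proof -
    from that obtain m n where "L = {p. tc a b p = m * sc a b p + n}" unfolding NP_def by blast
    hence "L = {p. tc a b p = fst (m,n) * sc a b p + snd (m,n)}" by simp
    hence "L = {p. tc a b p = fst (rep L) * sc a b p + snd (rep L)}"
      unfolding rep_def by (rule someI)
    thus ?thesis unfolding mu_def nu_def .
  qed
  have ddL: "L = {p. sc a b p = dd L}" if "L \<in> A" "\<not> NP L" for L
  proof -
    from line_cases[OF _ ab, of L] that lines obtain d where "L = {p. sc a b p = d}"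
      unfolding NP_def by blast
    thus ?thesis unfolding dd_def by (rule someI)
  qed
  have inNP: "tc a b p = mu L * sc a b p + nu L" if "NP L" "p \<in> L" for L p
  proof -
    have "p \<in> {p. tc a b p = mu L * sc a b p + nu L}"
      using that(2) by (subst (asm) repL[OF that(1)])
    thus ?thesis by simp
  qed
  have inP: "sc a b p = dd L" if "L \<in> A" "\<not> NP L" "p \<in> L" for L p
  proof -
    have "p \<in> {p. sc a b p = dd L}"
      using that(3) by (subst (asm) ddL[OF that(1,2)])
    thus ?thesis by simp
  qed
  have eqNP: "L = M" if "NP L" "NP M" "mu L = mu M" "tau L = tau M" for L M
  proof -
    have "nu L = nu M" using that(3,4) unfolding tau_def by simp
    hence "{p. tc a b p = mu L * sc a b p + nu L} = {p. tc a b p = mu M * sc a b p + nu M}"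
      using that(3) by simp
    thus ?thesis by (rule trans[OF repL[OF that(1)] trans[OF _ sym[OF repL[OF that(2)]]]])
  qed
  have eqP: "L = M" if "L \<in> A" "M \<in> A" "\<not> NP L" "\<not> NP M" "dd L = dd M" for L M
  proof -
    have "{p. sc a b p = dd L} = {p. sc a b p = dd M}" using that(5) by simp
    thus ?thesis by (rule trans[OF ddL[OF that(1,3)] trans[OF _ sym[OF ddL[OF that(2,4)]]]])
  qed
  have ident: "tau L - tau M = (mu L - mu M) * (c - sc a b p)"
    if "NP L" "NP M" "p \<in> L" "p \<in> M" for L M p
  proof -
    have "mu L * sc a b p + nu L = mu M * sc a b p + nu M"
      using inNP[OF that(1,3)] inNP[OF that(2,4)] by simp
    thus ?thesis unfolding tau_def by (simp add: algebra_simps)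
  qed
  define lt where "lt L M \<longleftrightarrow>
     (NP L \<and> NP M \<and> mu L \<le> mu M \<and> tau L \<le> tau M \<and> (mu L \<noteq> mu M \<or> tau L \<noteq> tau M)) \<or>
     (\<not> NP L \<and> dd L \<le> c \<and> NP M) \<or>
     (\<not> NP L \<and> dd L \<le> c \<and> \<not> NP M \<and> dd M \<le> c \<and> dd L < dd M)" for L M
  have irr: "\<forall>x\<in>A. \<not> lt x x" unfolding lt_def by auto
  have tr: "\<forall>x\<in>A. \<forall>y\<in>A. \<forall>z\<in>A. lt x y \<longrightarrow> lt y z \<longrightarrow> lt x z"
  proof (intro ballI impI)
    fix x y z assume "lt x y" "lt y z"
    thus "lt x z" unfolding lt_def by (elim disjE conjE) auto
  qed
  have chainH: "sc a b p \<le> c" if "L \<in> A" "M \<in> A" "lt L M" "p \<in> L" "p \<in> M" for L M p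
  proof (cases "NP L")
    case True
    have h: "NP M" "mu L \<le> mu M" "tau L \<le> tau M" "mu L \<noteq> mu M \<or> tau L \<noteq> tau M"
      using that(3) True unfolding lt_def by auto
    moreover have "tau L - tau M = (mu L - mu M) * (c - sc a b p)"
      using ident[OF True h(1) that(4,5)] .
    ultimately have id: "tau L - tau M = (mu L - mu M) * (c - sc a b p)" by blast
    have "mu L \<noteq> mu M" using id h by auto
    hence ml: "mu L - mu M < 0" using h by auto
    show ?thesis
    proof (rule ccontr)
      assume "\<not> sc a b p \<le> c"
      hence "c - sc a b p < 0" by simp
      hence "(mu L - mu M) * (c - sc a b p) > 0" using ml by (intro mult_neg_neg)
      thus False using id h by linarith
    qed
  next
    case False
    thus ?thesis using inP[OF that(1) False that(4)] that(3) unfolding lt_def by auto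
  qed
  have antiH: "c \<le> sc a b p" if "L \<in> A" "M \<in> A" "L \<noteq> M" "\<not> lt L M" "\<not> lt M L" "p \<in> L" "p \<in> M" for L M p
  proof (cases "NP L")
    case L: True
    show ?thesis
    proof (cases "NP M")
      case M: True
      have id: "tau L - tau M = (mu L - mu M) * (c - sc a b p)"
        using ident[OF L M that(6,7)] .
      have ne: "mu L \<noteq> mu M \<or> tau L \<noteq> tau M" using eqNP L M that(3) by blast
      show ?thesis
      proof (rule ccontr)
        assume "\<not> c \<le> sc a b p"
        hence pos: "c - sc a b p > 0" by simp
        show False
        proof (cases "mu L \<le> mu M")
          case True
          hence "(mu L - mu M) * (c - sc a b p) \<le> 0" using pos by (intro mult_nonpos_nonneg) auto
          hence "tau L \<le> tau M" using id by linarith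
          thus False using that(4) L M ne True unfolding lt_def by auto
        next
          case False
          hence "(mu L - mu M) * (c - sc a b p) \<ge> 0" using pos by (intro mult_nonneg_nonneg) auto
          hence "tau M \<le> tau L" using id by linarith
          thus False using that(5) L M ne False unfolding lt_def by auto
        qed
      qed
    next
      case M: False
      show ?thesis using inP[OF that(2) M that(7)] that(5) L M unfolding lt_def by auto
    qed
  next
    case L: False
    show ?thesis
    proof (cases "NP M")
      case M: True
      show ?thesis using inP[OF that(1) L that(6)] that(4) L M unfolding lt_def by auto
    next
      case M: False
      have "dd L \<noteq> dd M" using eqP[OF that(1,2) L M] that(3) by blast
      thus ?thesis using inP[OF that(1) L that(6)] inP[OF that(2) M that(7)] that(4,5) L M
        unfolding lt_def by auto
    qed
  qed
  obtain C where C: "C \<subseteq> A" "sqrt (real (card A)) \<le> real (card C)"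
    "(\<forall>x\<in>C. \<forall>y\<in>C. x \<noteq> y \<longrightarrow> lt x y \<or> lt y x) \<or> (\<forall>x\<in>C. \<forall>y\<in>C. \<not> lt x y)"
    using ES[OF fin irr tr] by (elim exE conjE) blast
  from C(3) show ?thesis
  proof
    assume ch: "\<forall>x\<in>C. \<forall>y\<in>C. x \<noteq> y \<longrightarrow> lt x y \<or> lt y x"
    have "V C \<subseteq> halfplane_minus a b c"
    proof
      fix p assume "p \<in> V C"
      then obtain L M where LM: "L \<in> C" "M \<in> C" "L \<noteq> M" "p \<in> L" "p \<in> M" unfolding V_def by auto
      have "sc a b p \<le> c"
      proof -
        have "lt L M \<or> lt M L" using ch LM by blast
        thus ?thesis using chainH[of L M p] chainH[of M L p] LM C(1) by blast
      qed
      thus "p \<in> halfplane_minus a b c" unfolding halfplane_minus_def sc_def by (cases p) auto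
    qed
    thus ?thesis using C by blast
  next
    assume ach: "\<forall>x\<in>C. \<forall>y\<in>C. \<not> lt x y"
    have "V C \<subseteq> halfplane_plus a b c"
    proof
      fix p assume "p \<in> V C"
      then obtain L M where LM: "L \<in> C" "M \<in> C" "L \<noteq> M" "p \<in> L" "p \<in> M" unfolding V_def by auto
      have "c \<le> sc a b p"
        using antiH[of L M p] ach LM C(1) by blast
      thus "p \<in> halfplane_plus a b c" unfolding halfplane_plus_def sc_def by (cases p) auto
    qed
    thus ?thesis using C by blast
  qed
qed


lemma line_through:
  assumes "is_line L" "p \<in> L" "q \<in> L" "p \<noteq> q"
  shows "L = {r. (fst r - fst p) * (snd q - snd p) - (snd r - snd p) * (fst q - fst p) = 0}"
proof -
  obtain u v w where uv: "(u, v) \<noteq> (0, 0)" and L: "L = line_eq u v w"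
    using assms(1) unfolding is_line_def by auto
  obtain p1 p2 q1 q2 where pq: "p = (p1, p2)" "q = (q1, q2)" by (cases p, cases q)
  have hp: "u * p1 + v * p2 = w" and hq: "u * q1 + v * q2 = w"
    using assms(2,3) unfolding L line_eq_def pq by auto
  have d: "u * (q1 - p1) + v * (q2 - p2) = 0" using hp hq by (simp add: algebra_simps)
  have dne: "q1 - p1 \<noteq> 0 \<or> q2 - p2 \<noteq> 0" using assms(4) pq by auto
  have "(u * r1 + v * r2 = w) \<longleftrightarrow> (r1 - p1) * (q2 - p2) - (r2 - p2) * (q1 - p1) = 0" for r1 r2
  proof -
    have e: "u * r1 + v * r2 = w \<longleftrightarrow> u * (r1 - p1) + v * (r2 - p2) = 0"
      using hp by (simp add: algebra_simps)
    define e1 where "e1 = r1 - p1"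
    define e2 where "e2 = r2 - p2"
    define d1 where "d1 = q1 - p1"
    define d2 where "d2 = q2 - p2"
    have d': "u * d1 + v * d2 = 0" using d unfolding d1_def d2_def .
    have dne': "d1 \<noteq> 0 \<or> d2 \<noteq> 0" using dne unfolding d1_def d2_def .
    have "u * e1 + v * e2 = 0 \<longleftrightarrow> e1 * d2 - e2 * d1 = 0"
    proof
      assume h: "u * e1 + v * e2 = 0"
      show "e1 * d2 - e2 * d1 = 0"
      proof (rule ccontr)
        assume nz: "e1 * d2 - e2 * d1 \<noteq> 0"
        have "u * (e1 * d2 - e2 * d1) = 0"
        proof -
          have "u * (e1 * d2 - e2 * d1) = d2 * (u * e1 + v * e2) - e2 * (u * d1 + v * d2)"
            by (simp add: algebra_simps)
          thus ?thesis using h d' by simp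
        qed
        moreover have "v * (e1 * d2 - e2 * d1) = 0"
        proof -
          have "v * (e1 * d2 - e2 * d1) = e1 * (u * d1 + v * d2) - d1 * (u * e1 + v * e2)"
            by (simp add: algebra_simps)
          thus ?thesis using h d' by simp
        qed
        ultimately show False using nz uv by simp
      qed
    next
      assume h: "e1 * d2 - e2 * d1 = 0"
      show "u * e1 + v * e2 = 0"
      proof (cases "d1 = 0")
        case True
        hence "d2 \<noteq> 0" using dne' by simp
        have "d2 * (u * e1 + v * e2) = e2 * (u * d1 + v * d2) + u * (e1 * d2 - e2 * d1)"
          by (simp add: algebra_simps)
        hence "d2 * (u * e1 + v * e2) = 0" using h d' by simp
        thus ?thesis using \<open>d2 \<noteq> 0\<close> by simp
      next
        case False
        have "d1 * (u * e1 + v * e2) = e1 * (u * d1 + v * d2) - v * (e1 * d2 - e2 * d1)"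
          by (simp add: algebra_simps)
        hence "d1 * (u * e1 + v * e2) = 0" using h d' by simp
        thus ?thesis using False by simp
      qed
    qed
    thus ?thesis using e unfolding e1_def e2_def d1_def d2_def by simp
  qed
  thus ?thesis unfolding L line_eq_def pq by auto
qed

lemma lines_meet_finite:
  assumes "is_line L" "is_line M" "L \<noteq> M"
  shows "finite (L \<inter> M)"
proof (cases "L \<inter> M = {}")
  case False
  then obtain p where p: "p \<in> L" "p \<in> M" by auto
  have "L \<inter> M \<subseteq> {p}"
  proof
    fix q assume q: "q \<in> L \<inter> M"
    show "q \<in> {p}"
    proof (rule ccontr)
      assume "q \<notin> {p}"
      hence pq: "p \<noteq> q" by auto
      have "L = M" using line_through[OF assms(1) p(1) _ pq] line_through[OF assms(2) p(2) _ pq] q by auto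
      thus False using assms(3) by simp
    qed
  qed
  thus ?thesis using finite_subset by blast
qed simp

lemma V_finite:
  assumes "finite S" "\<forall>L\<in>S. is_line L"
  shows "finite (V S)"
proof -
  have "V S = (\<Union>L\<in>S. \<Union>M\<in>S - {L}. L \<inter> M)" unfolding V_def by auto
  moreover have "finite (\<Union>L\<in>S. \<Union>M\<in>S - {L}. L \<inter> M)"
  proof (rule finite_UN_I)
    show "finite S" by fact
    fix L assume L: "L \<in> S"
    show "finite (\<Union>M\<in>S - {L}. L \<inter> M)"
    proof (rule finite_UN_I)
      show "finite (S - {L})" using assms by simp
      fix M assume "M \<in> S - {L}"
      thus "finite (L \<inter> M)" using L assms(2) lines_meet_finite by auto
    qed
  qed
  ultimately show ?thesis by simp
qed

lemma cont_Max:
  fixes f :: "'i \<Rightarrow> real \<Rightarrow> real"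
  assumes "finite I" "I \<noteq> {}" "\<And>i. i \<in> I \<Longrightarrow> continuous_on T (f i)"
  shows "continuous_on T (\<lambda>t. Max ((\<lambda>i. f i t) ` I))"
  using assms
proof (induction I rule: finite_ne_induct)
  case (singleton x) thus ?case by simp
next
  case (insert x F)
  have "continuous_on T (\<lambda>t. max (f x t) (Max ((\<lambda>i. f i t) ` F)))"
    using insert by (intro continuous_on_max) auto
  thus ?case using insert by simp
qed

lemma cont_Min:
  fixes f :: "'i \<Rightarrow> real \<Rightarrow> real"
  assumes "finite I" "I \<noteq> {}" "\<And>i. i \<in> I \<Longrightarrow> continuous_on T (f i)"
  shows "continuous_on T (\<lambda>t. Min ((\<lambda>i. f i t) ` I))"
  using assms
proof (induction I rule: finite_ne_induct)
  case (singleton x) thus ?case by simp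
next
  case (insert x F)
  have "continuous_on T (\<lambda>t. min (f x t) (Min ((\<lambda>i. f i t) ` F)))"
    using insert by (intro continuous_on_min) auto
  thus ?case using insert by simp
qed


definition good :: "(real \<times> real) set set \<Rightarrow> real \<Rightarrow> real \<Rightarrow> bool" where
  "good A t c \<longleftrightarrow>
    (\<exists>S\<subseteq>A. sqrt (real (card A)) \<le> real (card S) \<and> V S \<subseteq> halfplane_plus (cos (pi*t)) (sin (pi*t)) c) \<and>
    (\<exists>S\<subseteq>A. sqrt (real (card A)) \<le> real (card S) \<and> V S \<subseteq> halfplane_minus (cos (pi*t)) (sin (pi*t)) c)"

lemma nv_nz: "(cos (pi*t), sin (pi*t)) \<noteq> (0::real, 0::real)"
proof
  assume h: "(cos (pi*t), sin (pi*t)) = (0::real, 0::real)"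
  have "(sin (pi*t))\<^sup>2 + (cos (pi*t))\<^sup>2 = 0" using h by simp
  thus False using sin_cos_squared_add[of "pi*t"] by linarith
qed

lemma sqrt_le_nat: "sqrt (real n) \<le> real n"
proof (cases "n = 0")
  case False
  hence "1 \<le> real n" by simp
  hence "1 * real n \<le> real n * real n" by (intro mult_right_mono) auto
  hence "sqrt (real n) \<le> sqrt (real n * real n)" by (intro real_sqrt_le_mono) simp
  thus ?thesis by simp
qed simp

lemma interval_fun:
  assumes fin: "finite A" and lines: "\<forall>L\<in>A. is_line L"
  shows "\<exists>al be. continuous_on UNIV al \<and> continuous_on UNIV be \<and> (\<forall>t. be t \<le> al t) \<and>
     al 1 = - be 0 \<and> be 1 = - al 0 \<and> (\<forall>t c. be t \<le> c \<and> c \<le> al t \<longrightarrow> good A t c)"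
proof (cases "\<exists>S\<subseteq>A. sqrt (real (card A)) \<le> real (card S) \<and> V S = {}")
  case True
  then obtain S where S: "S \<subseteq> A" "sqrt (real (card A)) \<le> real (card S)" "V S = {}" by blast
  have "good A t c" for t c unfolding good_def using S by auto
  thus ?thesis by (intro exI[of _ "\<lambda>_. 1"] exI[of _ "\<lambda>_. -1"]) auto
next
  case False
  define SS where "SS = {S. S \<subseteq> A \<and> sqrt (real (card A)) \<le> real (card S)}"
  define g where "g t p = cos (pi*t) * fst p + sin (pi*t) * snd p" for t :: real and p :: "real \<times> real"
  define al where "al t = Max ((\<lambda>S. Min ((\<lambda>p. g t p) ` V S)) ` SS)" for t
  define be where "be t = Min ((\<lambda>S. Max ((\<lambda>p. g t p) ` V S)) ` SS)" for t
  have SSfin: "finite SS" unfolding SS_def by (rule finite_subset[of _ "Pow A"]) (auto simp: fin)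
  have SSne: "SS \<noteq> {}" unfolding SS_def using sqrt_le_nat by auto
  have Vfin: "finite (V S)" if "S \<in> SS" for S
    using that fin lines unfolding SS_def by (intro V_finite) (auto intro: finite_subset)
  have Vne: "V S \<noteq> {}" if "S \<in> SS" for S
    using that False unfolding SS_def by blast
  have alc: "c \<le> al t \<longleftrightarrow> (\<exists>S\<in>SS. \<forall>p\<in>V S. c \<le> g t p)" for c t
    unfolding al_def using SSfin SSne Vfin Vne by (simp add: Max_ge_iff)
  have bec: "be t \<le> c \<longleftrightarrow> (\<exists>S\<in>SS. \<forall>p\<in>V S. g t p \<le> c)" for c t
    unfolding be_def using SSfin SSne Vfin Vne by (simp add: Min_le_iff)
  have hp: "p \<in> halfplane_plus (cos (pi*t)) (sin (pi*t)) c \<longleftrightarrow> c \<le> g t p" for p t c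
    unfolding halfplane_plus_def g_def by (cases p) auto
  have hm: "p \<in> halfplane_minus (cos (pi*t)) (sin (pi*t)) c \<longleftrightarrow> g t p \<le> c" for p t c
    unfolding halfplane_minus_def g_def by (cases p) auto
  have gcont: "continuous_on UNIV (\<lambda>t. g t p)" for p
    unfolding g_def by (intro continuous_intros)
  have alcont: "continuous_on UNIV al"
    unfolding al_def using SSfin SSne Vfin Vne gcont
    by (intro cont_Max cont_Min) auto
  have becont: "continuous_on UNIV be"
    unfolding be_def using SSfin SSne Vfin Vne gcont
    by (intro cont_Max cont_Min) auto
  have g0: "g 0 p = fst p" and g1: "g 1 p = - fst p" for p unfolding g_def by auto
  have goodI: "good A t c" if h1: "be t \<le> c" and h2: "c \<le> al t" for t c
  proof -
    obtain S1 where S1: "S1 \<in> SS" "\<forall>p\<in>V S1. c \<le> g t p" using alc h2 by blast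
    obtain S2 where S2: "S2 \<in> SS" "\<forall>p\<in>V S2. g t p \<le> c" using bec h1 by blast
    have "V S1 \<subseteq> halfplane_plus (cos (pi*t)) (sin (pi*t)) c" using S1 hp by auto
    moreover have "V S2 \<subseteq> halfplane_minus (cos (pi*t)) (sin (pi*t)) c" using S2 hm by auto
    ultimately show ?thesis unfolding good_def using S1 S2 unfolding SS_def by blast
  qed
  have bele: "be t \<le> al t" for t
  proof (rule ccontr)
    assume "\<not> be t \<le> al t"
    define c where "c = (al t + be t) / 2"
    have c1: "\<not> c \<le> al t" and c2: "\<not> be t \<le> c" using \<open>\<not> be t \<le> al t\<close> unfolding c_def by auto
    from dichotomy[OF fin lines nv_nz[of t], of c] show False
    proof
      assume "\<exists>S\<subseteq>A. sqrt (real (card A)) \<le> real (card S) \<and> V S \<subseteq> halfplane_plus (cos (pi*t)) (sin (pi*t)) c"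
      then obtain S where "S \<in> SS" "V S \<subseteq> halfplane_plus (cos (pi*t)) (sin (pi*t)) c"
        unfolding SS_def by blast
      hence "c \<le> al t" using alc hp by blast
      thus False using c1 by simp
    next
      assume "\<exists>S\<subseteq>A. sqrt (real (card A)) \<le> real (card S) \<and> V S \<subseteq> halfplane_minus (cos (pi*t)) (sin (pi*t)) c"
      then obtain S where "S \<in> SS" "V S \<subseteq> halfplane_minus (cos (pi*t)) (sin (pi*t)) c"
        unfolding SS_def by blast
      hence "be t \<le> c" using bec hm by blast
      thus False using c2 by simp
    qed
  qed
  have a1: "al 1 = - be 0"
  proof -
    have "c \<le> al 1 \<longleftrightarrow> be 0 \<le> - c" for c
      unfolding alc bec g0 g1 by (auto simp: le_minus_iff minus_le_iff)
    from this[of "al 1"] this[of "- be 0"] show ?thesis by simp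
  qed
  have b1: "be 1 = - al 0"
  proof -
    have "be 1 \<le> c \<longleftrightarrow> - c \<le> al 0" for c
      unfolding alc bec g0 g1 by (auto simp: le_minus_iff minus_le_iff)
    from this[of "be 1"] this[of "- al 0"] show ?thesis by simp
  qed
  show ?thesis using alcont becont bele a1 b1 goodI by blast
qed


theorem mainTheorem3:
  fixes A1 A2 :: "(real \<times> real) set set"
  assumes "finite A1" and "finite A2"
    and "\<forall>L\<in>A1. is_line L" and "\<forall>L\<in>A2. is_line L"
  shows "\<exists>a b c. (a, b) \<noteq> (0, 0) \<and>
    (\<exists>A1p A1m A2p A2m.
       A1p \<subseteq> A1 \<and> A1m \<subseteq> A1 \<and> A2p \<subseteq> A2 \<and> A2m \<subseteq> A2 \<and>
       real (card A1p) \<ge> sqrt (real (card A1)) \<and>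
       real (card A1m) \<ge> sqrt (real (card A1)) \<and>
       real (card A2p) \<ge> sqrt (real (card A2)) \<and>
       real (card A2m) \<ge> sqrt (real (card A2)) \<and>
       V A1p \<subseteq> halfplane_plus a b c \<and> V A1m \<subseteq> halfplane_minus a b c \<and>
       V A2p \<subseteq> halfplane_plus a b c \<and> V A2m \<subseteq> halfplane_minus a b c)"
proof -
  obtain al1 be1 where I1: "continuous_on UNIV al1" "continuous_on UNIV be1" "\<forall>t. be1 t \<le> al1 t"
     "al1 1 = - be1 0" "be1 1 = - al1 0" "\<forall>t c. be1 t \<le> c \<and> c \<le> al1 t \<longrightarrow> good A1 t c"
    using interval_fun[OF assms(1,3)] by blast
  obtain al2 be2 where I2: "continuous_on UNIV al2" "continuous_on UNIV be2" "\<forall>t. be2 t \<le> al2 t"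
     "al2 1 = - be2 0" "be2 1 = - al2 0" "\<forall>t c. be2 t \<le> c \<and> c \<le> al2 t \<longrightarrow> good A2 t c"
    using interval_fun[OF assms(2,4)] by blast
  define F where "F t = al1 t + be1 t - al2 t - be2 t" for t
  have Fc: "continuous_on {0..1} F" unfolding F_def
    using I1(1,2) I2(1,2) by (intro continuous_intros) (auto intro: continuous_on_subset)
  have F1: "F 1 = - F 0" unfolding F_def using I1(4,5) I2(4,5) by simp
  obtain t where t: "F t = 0"
  proof (cases "F 0 \<le> 0")
    case True
    then obtain t where "F t = 0" using IVT'[of F 0 0 1] Fc F1 by auto
    thus ?thesis using that by blast
  next
    case False
    then obtain t where "F t = 0" using IVT2'[of F 1 0 0] Fc F1 by auto
    thus ?thesis using that by blast
  qed
  define c where "c = (al1 t + be1 t) / 2"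
  have "be1 t \<le> al1 t" "be2 t \<le> al2 t" using I1(3) I2(3) by auto
  hence "be1 t \<le> c \<and> c \<le> al1 t" "be2 t \<le> c \<and> c \<le> al2 t"
    using t unfolding c_def F_def by auto
  hence g1: "good A1 t c" and g2: "good A2 t c" using I1(6) I2(6) by auto
  obtain P1 M1 where P1: "P1 \<subseteq> A1" "sqrt (real (card A1)) \<le> real (card P1)"
      "V P1 \<subseteq> halfplane_plus (cos (pi*t)) (sin (pi*t)) c"
    and M1: "M1 \<subseteq> A1" "sqrt (real (card A1)) \<le> real (card M1)"
      "V M1 \<subseteq> halfplane_minus (cos (pi*t)) (sin (pi*t)) c"
    using g1 unfolding good_def by (elim conjE exE) blast
  obtain P2 M2 where P2: "P2 \<subseteq> A2" "sqrt (real (card A2)) \<le> real (card P2)"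
      "V P2 \<subseteq> halfplane_plus (cos (pi*t)) (sin (pi*t)) c"
    and M2: "M2 \<subseteq> A2" "sqrt (real (card A2)) \<le> real (card M2)"
      "V M2 \<subseteq> halfplane_minus (cos (pi*t)) (sin (pi*t)) c"
    using g2 unfolding good_def by (elim conjE exE) blast
  show ?thesis
    apply (rule exI[of _ "cos (pi*t)"], rule exI[of _ "sin (pi*t)"], rule exI[of _ c])
    apply (rule conjI[OF nv_nz])
    apply (rule exI[of _ P1], rule exI[of _ M1], rule exI[of _ P2], rule exI[of _ M2])
    using P1 M1 P2 M2 by simp
qed

end
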